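(* A normal TDD is reduced if and only if none of the reduction rules RR1, RR2, RR3, RR4 is applicable to it.
   Context: Fix a finite index set $I$ with a linear order $\prec$. Indices take values in $\{0,1\}$; a tensor over $I$ is a map $\{0,1\}^I\to\mathbb{C}$ (tensors over subsets of $I$ are regarded as tensors over $I$ not depending on the other indices). Each index $x$ is regarded as the tensor $x(c)=c$, and $\overline{x}(c):=1-c$; operations on tensors are pointwise. A TDD over $I$ is $\mathcal F=(V,E,index,value,low,high,w)$: a rooted directed acyclic graph with finite node set $V$ partitioned into non-terminal nodes $V_N$ and terminal nodes $V_T$, root $r_{\mathcal F}$; $index:V_N\to I$; $value:V_T\to\mathbb{C}$; $low,high:V_N\to V$ (0- and 1-successors); edges are the low-edges $(v,low(v))$ and high-edges $(v,high(v))$, $v\in V_N$, plus a unique source-less incoming edge $e_r$ of the root; $w$ gives each edge a complex weight and $w_{\mathcal F}:=w(e_r)$. Node tensors: $\Phi(v)=value(v)$ for terminal $v$; otherwise $\Phi(v)=w_0\overline{x_v}\Phi(low(v))+w_1x_v\Phi(high(v))$ with $x_v=index(v)$ and $w_0,w_1$ the low-/high-edge weights. The TDD represents $\Phi(\mathcal F):=w_{\mathcal F}\Phi(r_{\mathcal F})$. Normality (w.r.t. $\prec$): the pivot of a tensor $\phi$ is the lexicographically smallest (compare at the $\prec$-smallest differing index, $0<1$) $\vec a$ with $|\phi(\vec a)|=\max_{\vec b}|\phi(\vec b)|$; $\phi$ is normal if $\phi=0$ or $\phi$ equals $1$ at its pivot. A TDD is normal if $\Phi(v)$ is normal for every node $v$.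 A TDD is reduced if it is normal and (1) $\Phi(v)\neq0$ for every node $v$; (2) all edges of weight $0$ point to the unique terminal node, which has value $1$; (3) $\Phi(u)\neq\Phi(v)$ for any two distinct nodes $u\neq v$. Reduction rules. RR1: merge all terminal nodes with value $1$; delete all terminal nodes with value $0$ (if any), redirect their incoming edges to the (unique) terminal node and reset the weights of these edges to $0$. RR2: redirect all weight-$0$ edges to the terminal node; if these include the incoming edge of the root, the terminal node becomes the new root; delete all nodes (and edges involving them) not reachable from the root. RR3: delete a node $v$ if its 0- and 1-successors are identical and its low- and high-edges have the same weight $w$ (either $0$ or $1$), redirecting its incoming edges to the terminal node with value $1$ if $w=0$ and otherwise to its successor. RR4: merge two nodes if they have the same index, the same 0- and 1-successors, and the same weights on the corresponding edges. *)

theory Defs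
  imports Complex_Main
begin

text \<open>Index set I: a finite set of a linearly ordered type; the linear order
  of the type is the order used for normality and orderedness.
  An assignment (element of the set of maps from I to the two-element set) is a
  map from indices to bool (False = 0, True = 1) that is False outside I.
  A tensor over I is a map from assignments to complex numbers; only its values
  on assignments in asg I matter.\<close>

type_synonym 'i tensor = "('i \<Rightarrow> bool) \<Rightarrow> complex"

definition asg :: "'i set \<Rightarrow> ('i \<Rightarrow> bool) set" where
  "asg I = {a. \<forall>i. i \<notin> I \<longrightarrow> \<not> a i}"

definition lex_less :: "'i::linorder set \<Rightarrow> ('i \<Rightarrow> bool) \<Rightarrow> ('i \<Rightarrow> bool) \<Rightarrow> bool" where
  "lex_less I a b \<longleftrightarrow> (\<exists>i\<in>I. \<not> a i \<and> b i \<and> (\<forall>j\<in>I. j < i \<longrightarrow> a j = b j))"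

definition is_pivot :: "'i::linorder set \<Rightarrow> 'i tensor \<Rightarrow> ('i \<Rightarrow> bool) \<Rightarrow> bool" where
  "is_pivot I \<phi> a \<longleftrightarrow> a \<in> asg I \<and> (\<forall>b\<in>asg I. cmod (\<phi> b) \<le> cmod (\<phi> a)) \<and>
     (\<forall>b\<in>asg I. cmod (\<phi> b) = cmod (\<phi> a) \<longrightarrow> b = a \<or> lex_less I a b)"

definition pivot :: "'i::linorder set \<Rightarrow> 'i tensor \<Rightarrow> ('i \<Rightarrow> bool)" where
  "pivot I \<phi> = (THE a. is_pivot I \<phi> a)"

definition zero_tensor :: "'i set \<Rightarrow> 'i tensor \<Rightarrow> bool" where
  "zero_tensor I \<phi> \<longleftrightarrow> (\<forall>a\<in>asg I. \<phi> a = 0)"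

definition tensor_eq :: "'i set \<Rightarrow> 'i tensor \<Rightarrow> 'i tensor \<Rightarrow> bool" where
  "tensor_eq I \<phi> \<psi> \<longleftrightarrow> (\<forall>a\<in>asg I. \<phi> a = \<psi> a)"

definition normal_tensor :: "'i::linorder set \<Rightarrow> 'i tensor \<Rightarrow> bool" where
  "normal_tensor I \<phi> \<longleftrightarrow> zero_tensor I \<phi> \<or> \<phi> (pivot I \<phi>) = 1"

record ('v, 'i) tdd =
  nodes :: "'v set"
  terms :: "'v set"
  root :: 'v
  idx :: "'v \<Rightarrow> 'i"
  val :: "'v \<Rightarrow> complex"
  lo :: "'v \<Rightarrow> 'v"
  hi :: "'v \<Rightarrow> 'v"
  wlo :: "'v \<Rightarrow> complex"
  whi :: "'v \<Rightarrow> complex"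
  wroot :: complex

definition nonterms :: "('v, 'i) tdd \<Rightarrow> 'v set" where
  "nonterms F = nodes F - terms F"

definition succ_rel :: "('v, 'i) tdd \<Rightarrow> ('v \<times> 'v) set" where
  "succ_rel F = {(v, lo F v) | v. v \<in> nonterms F} \<union> {(v, hi F v) | v. v \<in> nonterms F}"

definition is_tdd :: "'i set \<Rightarrow> ('v, 'i) tdd \<Rightarrow> bool" where
  "is_tdd I F \<longleftrightarrow> finite I \<and> finite (nodes F) \<and> root F \<in> nodes F \<and> terms F \<subseteq> nodes F \<and>
     (\<forall>v\<in>nonterms F. idx F v \<in> I \<and> lo F v \<in> nodes F \<and> hi F v \<in> nodes F) \<and>
     acyclic (succ_rel F) \<and>
     (\<forall>v\<in>nodes F. (root F, v) \<in> (succ_rel F)\<^sup>*)"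

definition ordered_tdd :: "('v, 'i::linorder) tdd \<Rightarrow> bool" where
  "ordered_tdd F \<longleftrightarrow> (\<forall>v\<in>nonterms F.
      (lo F v \<in> nonterms F \<longrightarrow> idx F v < idx F (lo F v)) \<and>
      (hi F v \<in> nonterms F \<longrightarrow> idx F v < idx F (hi F v)))"

text \<open>Node tensors, computed by unfolding the defining recursion
  Phi(v) = w0 * (1 - x_v) * Phi(low v) + w1 * x_v * Phi(high v)
  with a fuel parameter; in a DAG with n nodes, fuel n suffices.\<close>
primrec node_tensor_aux :: "('v, 'i) tdd \<Rightarrow> nat \<Rightarrow> 'v \<Rightarrow> 'i tensor" where
  "node_tensor_aux F 0 v a = (if v \<in> terms F then val F v else 0)"
| "node_tensor_aux F (Suc n) v a =
     (if v \<in> terms F then val F v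
      else wlo F v * (1 - (if a (idx F v) then 1 else 0)) * node_tensor_aux F n (lo F v) a
         + whi F v * (if a (idx F v) then 1 else 0) * node_tensor_aux F n (hi F v) a)"

definition node_tensor :: "('v, 'i) tdd \<Rightarrow> 'v \<Rightarrow> 'i tensor" where
  "node_tensor F v = node_tensor_aux F (card (nodes F)) v"

definition normal_tdd :: "'i::linorder set \<Rightarrow> ('v, 'i) tdd \<Rightarrow> bool" where
  "normal_tdd I F \<longleftrightarrow> (\<forall>v\<in>nodes F. normal_tensor I (node_tensor F v))"

definition reduced_tdd :: "'i::linorder set \<Rightarrow> ('v, 'i) tdd \<Rightarrow> bool" where
  "reduced_tdd I F \<longleftrightarrow> normal_tdd I F \<and>
     (\<forall>v\<in>nodes F. \<not> zero_tensor I (node_tensor F v)) \<and>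
     (\<exists>t. terms F = {t} \<and> val F t = 1 \<and>
        (\<forall>v\<in>nonterms F. (wlo F v = 0 \<longrightarrow> lo F v = t) \<and> (whi F v = 0 \<longrightarrow> hi F v = t)) \<and>
        (wroot F = 0 \<longrightarrow> root F = t)) \<and>
     (\<forall>u\<in>nodes F. \<forall>v\<in>nodes F. u \<noteq> v \<longrightarrow> \<not> tensor_eq I (node_tensor F u) (node_tensor F v))"

text \<open>Applicability of the reduction rules (i.e. applying them would change the TDD).\<close>

definition RR1_applicable :: "('v, 'i) tdd \<Rightarrow> bool" where
  "RR1_applicable F \<longleftrightarrow> (\<exists>t\<in>terms F. val F t = 0) \<or>
     (\<exists>t1\<in>terms F. \<exists>t2\<in>terms F. t1 \<noteq> t2 \<and> val F t1 = 1 \<and> val F t2 = 1)"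

definition RR2_applicable :: "('v, 'i) tdd \<Rightarrow> bool" where
  "RR2_applicable F \<longleftrightarrow>
     (\<exists>v\<in>nonterms F. (wlo F v = 0 \<and> lo F v \<notin> terms F) \<or> (whi F v = 0 \<and> hi F v \<notin> terms F)) \<or>
     (wroot F = 0 \<and> root F \<notin> terms F) \<or>
     (\<exists>v\<in>nodes F. (root F, v) \<notin> (succ_rel F)\<^sup>*)"

definition RR3_applicable :: "('v, 'i) tdd \<Rightarrow> bool" where
  "RR3_applicable F \<longleftrightarrow> (\<exists>v\<in>nonterms F. lo F v = hi F v \<and> wlo F v = whi F v \<and>
     (wlo F v = 0 \<or> wlo F v = 1))"

definition RR4_applicable :: "('v, 'i) tdd \<Rightarrow> bool" where
  "RR4_applicable F \<longleftrightarrow> (\<exists>u\<in>nonterms F. \<exists>v\<in>nonterms F. u \<noteq> v \<and> idx F u = idx F v \<and>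
     lo F u = lo F v \<and> hi F u = hi F v \<and> wlo F u = wlo F v \<and> whi F u = whi F v)"

end

theory Submission
  imports Defs
begin

lemma finite_asg: assumes "finite I" shows "finite (asg I)"
proof -
  have "asg I \<subseteq> (\<lambda>S i. i \<in> S) ` Pow I"
  proof
    fix a assume "a \<in> asg I"
    hence "{i. a i} \<subseteq> I" "a = (\<lambda>i. i \<in> {i. a i})" by (auto simp: asg_def)
    thus "a \<in> (\<lambda>S i. i \<in> S) ` Pow I" by blast
  qed
  thus ?thesis using assms by (meson finite_Pow_iff finite_imageI finite_subset)
qed

lemma lex_asym: "lex_less I a b \<Longrightarrow> lex_less I b a \<Longrightarrow> False"
  unfolding lex_less_def by (metis linorder_neqE)

lemma lex_trans: assumes "lex_less I a b" "lex_less I b c" shows "lex_less I a c"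
proof -
  obtain i i' where i: "i\<in>I" "\<not> a i" "b i" "\<forall>j\<in>I. j < i \<longrightarrow> a j = b j"
    and i': "i'\<in>I" "\<not> b i'" "c i'" "\<forall>j\<in>I. j < i' \<longrightarrow> b j = c j"
    using assms unfolding lex_less_def by blast
  consider "i < i'" | "i' < i" | "i = i'" by fastforce
  then show ?thesis
  proof cases
    case 1 then show ?thesis using i i' unfolding lex_less_def
      by (intro bexI[of _ i]) (auto dest: less_trans)
  next
    case 2 then show ?thesis using i i' unfolding lex_less_def
      by (intro bexI[of _ i']) (auto dest: less_trans)
  next
    case 3 then show ?thesis using i i' by auto
  qed
qed

lemma lex_total:
  assumes "finite I" "a \<in> asg I" "b \<in> asg I" "a \<noteq> b"
  shows "lex_less I a b \<or> lex_less I b a"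
proof -
  define D where "D = {i\<in>I. a i \<noteq> b i}"
  have "D \<noteq> {}"
  proof
    assume "D = {}"
    hence "a = b" using assms(2,3) unfolding D_def asg_def by (auto intro!: ext)
    thus False using assms(4) by simp
  qed
  moreover have fD: "finite D" using assms(1) unfolding D_def by simp
  ultimately have m: "Min D \<in> D" "\<forall>j\<in>D. Min D \<le> j" by auto
  have agree: "\<forall>j\<in>I. j < Min D \<longrightarrow> a j = b j"
    using m(2) unfolding D_def by force
  show ?thesis
  proof (cases "a (Min D)")
    case True
    then show ?thesis using m(1) agree unfolding lex_less_def D_def by (intro disjI2) force
  next
    case False
    then show ?thesis using m(1) agree unfolding lex_less_def D_def by (intro disjI1) force
  qed
qed

lemma exists_min:
  assumes "finite I" "finite S" "S \<noteq> {}" "S \<subseteq> asg I"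
  shows "\<exists>m\<in>S. \<forall>b\<in>S. b = m \<or> lex_less I m b"
  using assms(2,3,4)
proof (induction S rule: finite_ne_induct)
  case (singleton x) then show ?case by auto
next
  case (insert x S)
  then obtain m where m: "m \<in> S" "\<forall>b\<in>S. b = m \<or> lex_less I m b" by auto
  show ?case
  proof (cases "lex_less I x m")
    case True
    then show ?thesis using m by (intro bexI[of _ x]) (auto intro: lex_trans)
  next
    case False
    then have "x = m \<or> lex_less I m x" using lex_total[OF assms(1), of x m] insert m by auto
    then show ?thesis using m by (intro bexI[of _ m]) auto
  qed
qed

lemma pivot_exists:
  assumes "finite I" shows "\<exists>a. is_pivot I \<phi> a"
proof -
  have fa: "finite (asg I)" using finite_asg[OF assms] .
  have ne: "(\<lambda>_. False) \<in> asg I" by (simp add: asg_def)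
  define M where "M = Max ((\<lambda>b. cmod (\<phi> b)) ` asg I)"
  have Mge: "\<forall>b\<in>asg I. cmod (\<phi> b) \<le> M" unfolding M_def using fa by auto
  have "M \<in> (\<lambda>b. cmod (\<phi> b)) ` asg I" unfolding M_def using fa ne by (intro Max_in) auto
  then obtain b0 where b0: "b0 \<in> asg I" "cmod (\<phi> b0) = M" by auto
  define S where "S = {b\<in>asg I. cmod (\<phi> b) = M}"
  have "finite S" "S \<noteq> {}" "S \<subseteq> asg I" using fa b0 unfolding S_def by auto
  then obtain m where m: "m \<in> S" "\<forall>b\<in>S. b = m \<or> lex_less I m b"
    using exists_min[OF assms] by blast
  have "is_pivot I \<phi> m" unfolding is_pivot_def using m Mge unfolding S_def by auto
  thus ?thesis by blast
qed

lemma pivot_unique: "is_pivot I \<phi> a \<Longrightarrow> is_pivot I \<phi> b \<Longrightarrow> a = b"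
  unfolding is_pivot_def by (metis order_antisym lex_asym)

lemma is_pivot_pivot: "finite I \<Longrightarrow> is_pivot I \<phi> (pivot I \<phi>)"
  unfolding pivot_def using pivot_exists pivot_unique by (metis theI)

lemma scale_one:
  assumes "finite I" "normal_tensor I \<psi>" "normal_tensor I \<phi>" "\<not> zero_tensor I \<psi>"
    and eq: "\<forall>a\<in>asg I. \<psi> a = c * \<phi> a"
  shows "c = 1"
proof -
  have c0: "c \<noteq> 0" using assms(4) eq unfolding zero_tensor_def by auto
  have "\<not> zero_tensor I \<phi>" using assms(4) eq unfolding zero_tensor_def by auto
  have "is_pivot I \<psi> = is_pivot I \<phi>"
  proof (intro ext)
    fix a
    have "\<forall>b\<in>asg I. cmod (\<psi> b) = cmod c * cmod (\<phi> b)" using eq by (simp add: norm_mult)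
    moreover have "cmod c > 0" using c0 by simp
    ultimately show "is_pivot I \<psi> a = is_pivot I \<phi> a" unfolding is_pivot_def
      by (smt (verit, best) mult_left_mono mult_le_cancel_left_pos mult_cancel_left)
  qed
  hence pe: "pivot I \<psi> = pivot I \<phi>" unfolding pivot_def by simp
  have pin: "pivot I \<phi> \<in> asg I" using is_pivot_pivot[OF assms(1)] unfolding is_pivot_def by blast
  have "\<psi> (pivot I \<phi>) = 1" using assms(2,4) pe unfolding normal_tensor_def by simp
  moreover have "\<phi> (pivot I \<phi>) = 1" using assms(3) \<open>\<not> zero_tensor I \<phi>\<close> unfolding normal_tensor_def by simp
  ultimately show ?thesis using eq pin by auto
qed

locale tddctx =
  fixes I :: "'i::linorder set" and F :: "('v, 'i) tdd"
  assumes wf: "is_tdd I F" and ord: "ordered_tdd F"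
begin

lemma finI: "finite I" and finN: "finite (nodes F)" and rootN: "root F \<in> nodes F"
  and termsN: "terms F \<subseteq> nodes F"
  and ntI: "v \<in> nonterms F \<Longrightarrow> idx F v \<in> I"
  and ntlo: "v \<in> nonterms F \<Longrightarrow> lo F v \<in> nodes F"
  and nthi: "v \<in> nonterms F \<Longrightarrow> hi F v \<in> nodes F"
  and reach: "v \<in> nodes F \<Longrightarrow> (root F, v) \<in> (succ_rel F)\<^sup>*"
  using wf unfolding is_tdd_def by auto

lemma ordlo: "v \<in> nonterms F \<Longrightarrow> lo F v \<in> nonterms F \<Longrightarrow> idx F v < idx F (lo F v)"
  and ordhi: "v \<in> nonterms F \<Longrightarrow> hi F v \<in> nonterms F \<Longrightarrow> idx F v < idx F (hi F v)"
  using ord unfolding ordered_tdd_def by auto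

lemma finNT: "finite (nonterms F)" using finN unfolding nonterms_def by simp

lemma nodes_cases: "v \<in> nodes F \<Longrightarrow> v \<notin> terms F \<Longrightarrow> v \<in> nonterms F"
  unfolding nonterms_def by auto

lemma nt_not_term: "v \<in> nonterms F \<Longrightarrow> v \<notin> terms F" unfolding nonterms_def by auto

definition rk :: "'v \<Rightarrow> nat" where
  "rk v = (if v \<in> nonterms F then card {i \<in> idx F ` nonterms F. idx F v \<le> i} else 0)"

lemma rk_pos: "v \<in> nonterms F \<Longrightarrow> rk v > 0"
  unfolding rk_def using finNT by (auto simp: card_gt_0_iff)

lemma rk_child:
  assumes "v \<in> nonterms F" "c \<in> nonterms F \<Longrightarrow> idx F v < idx F c"
  shows "rk c < rk v"
proof (cases "c \<in> nonterms F")
  case False then show ?thesis using rk_pos[OF assms(1)] unfolding rk_def by simp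
next
  case True
  have "{i \<in> idx F ` nonterms F. idx F c \<le> i} \<subset> {i \<in> idx F ` nonterms F. idx F v \<le> i}"
  proof
    show "{i \<in> idx F ` nonterms F. idx F c \<le> i} \<subseteq> {i \<in> idx F ` nonterms F. idx F v \<le> i}"
      using assms True by auto
    have "idx F v \<notin> {i \<in> idx F ` nonterms F. idx F c \<le> i}" using assms True by auto
    moreover have "idx F v \<in> {i \<in> idx F ` nonterms F. idx F v \<le> i}" using assms by auto
    ultimately show "{i \<in> idx F ` nonterms F. idx F c \<le> i} \<noteq> {i \<in> idx F ` nonterms F. idx F v \<le> i}" by blast
  qed
  then show ?thesis unfolding rk_def using True assms(1) finNT by (simp add: psubset_card_mono)
qed

lemma rk_lo: "v \<in> nonterms F \<Longrightarrow> rk (lo F v) < rk v" using rk_child ordlo by blast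
lemma rk_hi: "v \<in> nonterms F \<Longrightarrow> rk (hi F v) < rk v" using rk_child ordhi by blast

lemma rk_le: "rk v \<le> card (nodes F)"
proof -
  have "card {i \<in> idx F ` nonterms F. idx F v \<le> i} \<le> card (idx F ` nonterms F)"
    using finNT by (intro card_mono) auto
  also have "\<dots> \<le> card (nonterms F)" by (rule card_image_le[OF finNT])
  also have "\<dots> \<le> card (nodes F)" using finN unfolding nonterms_def by (intro card_mono) auto
  finally show ?thesis unfolding rk_def by auto
qed

lemma aux_term: "v \<in> terms F \<Longrightarrow> node_tensor_aux F m v = (\<lambda>a. val F v)"
  by (cases m) (auto intro!: ext)

lemma aux_stable:
  "\<forall>v\<in>nodes F. \<forall>m. rk v \<le> n \<longrightarrow> rk v \<le> m \<longrightarrow> node_tensor_aux F n v = node_tensor_aux F m v"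
proof (induction n)
  case 0
  show ?case
  proof (intro ballI allI impI)
    fix v m assume "v \<in> nodes F" "rk v \<le> 0"
    hence "v \<in> terms F" using rk_pos nodes_cases by fastforce
    thus "node_tensor_aux F 0 v = node_tensor_aux F m v" using aux_term by simp
  qed
next
  case (Suc n)
  show ?case
  proof (intro ballI allI impI)
    fix v m assume v: "v \<in> nodes F" "rk v \<le> Suc n" "rk v \<le> m"
    show "node_tensor_aux F (Suc n) v = node_tensor_aux F m v"
    proof (cases "v \<in> terms F")
      case True then show ?thesis using aux_term by simp
    next
      case False
      hence nt: "v \<in> nonterms F" using v nodes_cases by blast
      then obtain m' where m: "m = Suc m'" using rk_pos[OF nt] v by (cases m) auto
      have "node_tensor_aux F n (lo F v) = node_tensor_aux F m' (lo F v)"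
        using Suc.IH ntlo[OF nt] rk_lo[OF nt] v m by auto
      moreover have "node_tensor_aux F n (hi F v) = node_tensor_aux F m' (hi F v)"
        using Suc.IH nthi[OF nt] rk_hi[OF nt] v m by auto
      ultimately show ?thesis using False m by (auto intro!: ext)
    qed
  qed
qed

lemma nt_term: "v \<in> terms F \<Longrightarrow> node_tensor F v a = val F v"
  unfolding node_tensor_def using aux_term by simp

lemma nt_rec: assumes "v \<in> nonterms F"
  shows "node_tensor F v a = wlo F v * (1 - (if a (idx F v) then 1 else 0)) * node_tensor F (lo F v) a
     + whi F v * (if a (idx F v) then 1 else 0) * node_tensor F (hi F v) a"
proof -
  obtain k where k: "card (nodes F) = Suc k" using rk_pos[OF assms] rk_le[of v]
    by (cases "card (nodes F)") auto
  have "node_tensor_aux F k (lo F v) = node_tensor_aux F (card (nodes F)) (lo F v)"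
    using aux_stable ntlo[OF assms] rk_lo[OF assms] rk_le[of v] rk_le[of "lo F v"] k by auto
  moreover have "node_tensor_aux F k (hi F v) = node_tensor_aux F (card (nodes F)) (hi F v)"
    using aux_stable nthi[OF assms] rk_hi[OF assms] rk_le[of v] rk_le[of "hi F v"] k by auto
  ultimately show ?thesis unfolding node_tensor_def using k nt_not_term[OF assms] by simp
qed

lemma indep:
  assumes "v \<in> nodes F" "v \<in> nonterms F \<Longrightarrow> j < idx F v" "\<forall>i. j < i \<longrightarrow> a i = b i"
  shows "node_tensor F v a = node_tensor F v b"
  using assms(1,2)
proof (induction "rk v" arbitrary: v rule: less_induct)
  case less
  show ?case
  proof (cases "v \<in> terms F")
    case True then show ?thesis using nt_term by simp
  next
    case False
    hence nt: "v \<in> nonterms F" using less nodes_cases by blast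
    have j: "j < idx F v" using less nt by blast
    have "node_tensor F (lo F v) a = node_tensor F (lo F v) b"
      using less(1)[OF rk_lo[OF nt] ntlo[OF nt]] ordlo[OF nt] j by (meson less_trans)
    moreover have "node_tensor F (hi F v) a = node_tensor F (hi F v) b"
      using less(1)[OF rk_hi[OF nt] nthi[OF nt]] ordhi[OF nt] j by (meson less_trans)
    moreover have "a (idx F v) = b (idx F v)" using assms(3) j by blast
    ultimately show ?thesis using nt_rec[OF nt] by simp
  qed
qed

lemma nt_lo: assumes "v \<in> nonterms F"
  shows "node_tensor F v (a(idx F v := False)) = wlo F v * node_tensor F (lo F v) a"
proof -
  have "node_tensor F (lo F v) (a(idx F v := False)) = node_tensor F (lo F v) a"
    using indep[OF ntlo[OF assms], of "idx F v"] ordlo[OF assms] by auto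
  thus ?thesis using nt_rec[OF assms] by simp
qed

lemma nt_hi: assumes "v \<in> nonterms F"
  shows "node_tensor F v (a(idx F v := True)) = whi F v * node_tensor F (hi F v) a"
proof -
  have "node_tensor F (hi F v) (a(idx F v := True)) = node_tensor F (hi F v) a"
    using indep[OF nthi[OF assms], of "idx F v"] ordhi[OF assms] by auto
  thus ?thesis using nt_rec[OF assms] by simp
qed

lemma asg_upd: "a \<in> asg I \<Longrightarrow> x \<in> I \<Longrightarrow> a(x := b) \<in> asg I"
  unfolding asg_def by auto

lemma asg_F: "(\<lambda>_. False) \<in> asg I" unfolding asg_def by simp

lemma ex_term: "v \<in> nodes F \<Longrightarrow> \<exists>t. t \<in> terms F"
proof (induction "rk v" arbitrary: v rule: less_induct)
  case less
  show ?case
  proof (cases "v \<in> terms F")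
    case False
    hence nt: "v \<in> nonterms F" using less nodes_cases by blast
    show ?thesis using less(1)[OF rk_lo[OF nt] ntlo[OF nt]] .
  qed blast
qed

lemma red_noRR:
  assumes red: "reduced_tdd I F"
  shows "\<not> (RR1_applicable F \<or> RR2_applicable F \<or> RR3_applicable F \<or> RR4_applicable F)"
proof -
  obtain t where t: "terms F = {t}" "val F t = 1"
    "\<forall>v\<in>nonterms F. (wlo F v = 0 \<longrightarrow> lo F v = t) \<and> (whi F v = 0 \<longrightarrow> hi F v = t)"
    "wroot F = 0 \<longrightarrow> root F = t"
    using red unfolding reduced_tdd_def by blast
  have nz: "\<forall>v\<in>nodes F. \<not> zero_tensor I (node_tensor F v)"
    and ds: "\<forall>u\<in>nodes F. \<forall>v\<in>nodes F. u \<noteq> v \<longrightarrow> \<not> tensor_eq I (node_tensor F u) (node_tensor F v)"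
    using red unfolding reduced_tdd_def by auto
  have "\<not> RR1_applicable F" unfolding RR1_applicable_def using t by auto
  moreover have "\<not> RR2_applicable F" unfolding RR2_applicable_def using t reach by auto
  moreover have "\<not> RR3_applicable F"
  proof
    assume "RR3_applicable F"
    then obtain v where v: "v \<in> nonterms F" "lo F v = hi F v" "wlo F v = whi F v"
      "wlo F v = 0 \<or> wlo F v = 1" unfolding RR3_applicable_def by blast
    have vN: "v \<in> nodes F" using v unfolding nonterms_def by auto
    have eq: "\<And>a. node_tensor F v a = wlo F v * node_tensor F (lo F v) a"
      using nt_rec[OF v(1)] v(2,3) by (simp add: algebra_simps)
    show False using v(4)
    proof
      assume "wlo F v = 0"
      thus False using nz vN eq unfolding zero_tensor_def by auto
    next
      assume "wlo F v = 1"
      moreover have "v \<noteq> lo F v" using rk_lo[OF v(1)] by auto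
      ultimately show False using ds vN ntlo[OF v(1)] eq unfolding tensor_eq_def by auto
    qed
  qed
  moreover have "\<not> RR4_applicable F"
  proof
    assume "RR4_applicable F"
    then obtain u v where uv: "u \<in> nonterms F" "v \<in> nonterms F" "u \<noteq> v" "idx F u = idx F v"
     "lo F u = lo F v" "hi F u = hi F v" "wlo F u = wlo F v" "whi F u = whi F v"
      unfolding RR4_applicable_def by blast
    hence "tensor_eq I (node_tensor F u) (node_tensor F v)"
      unfolding tensor_eq_def using nt_rec[OF uv(1)] nt_rec[OF uv(2)] by simp
    thus False using ds uv unfolding nonterms_def by auto
  qed
  ultimately show ?thesis by blast
qed

end

locale tddnr = tddctx +
  assumes nrm: "normal_tdd I F" and n1: "\<not> RR1_applicable F" and n2: "\<not> RR2_applicable F"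
    and n3: "\<not> RR3_applicable F" and n4: "\<not> RR4_applicable F"
begin

abbreviation N where "N \<equiv> node_tensor F"

lemma nrmv: "v \<in> nodes F \<Longrightarrow> normal_tensor I (N v)" using nrm unfolding normal_tdd_def by auto

lemma terms_val1: assumes "u \<in> terms F" shows "val F u = 1"
proof -
  have "normal_tensor I (N u)" using nrmv assms termsN by auto
  moreover have "val F u \<noteq> 0" using n1 assms unfolding RR1_applicable_def by auto
  ultimately show ?thesis using asg_F nt_term[OF assms] unfolding normal_tensor_def zero_tensor_def
    by auto
qed

lemma unique_term: "u \<in> terms F \<Longrightarrow> w \<in> terms F \<Longrightarrow> u = w"
  using n1 terms_val1 unfolding RR1_applicable_def by blast

lemma lo_zero: "v \<in> nonterms F \<Longrightarrow> wlo F v = 0 \<Longrightarrow> lo F v \<in> terms F"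
  and hi_zero: "v \<in> nonterms F \<Longrightarrow> whi F v = 0 \<Longrightarrow> hi F v \<in> terms F"
  using n2 unfolding RR2_applicable_def by auto

lemma nz: "v \<in> nodes F \<Longrightarrow> \<not> zero_tensor I (N v)"
proof (induction "rk v" arbitrary: v rule: less_induct)
  case less
  show ?case
  proof (cases "v \<in> terms F")
    case True then show ?thesis using asg_F nt_term terms_val1 unfolding zero_tensor_def by fastforce
  next
    case False
    hence nt: "v \<in> nonterms F" using less nodes_cases by blast
    show ?thesis
    proof
      assume z: "zero_tensor I (N v)"
      obtain a where a: "a \<in> asg I" "N (lo F v) a \<noteq> 0"
        using less(1)[OF rk_lo[OF nt] ntlo[OF nt]] unfolding zero_tensor_def by blast
      have "N v (a(idx F v := False)) = 0" using z asg_upd[OF a(1) ntI[OF nt]] unfolding zero_tensor_def by blast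
      hence w0: "wlo F v = 0" using nt_lo[OF nt] a by simp
      obtain b where b: "b \<in> asg I" "N (hi F v) b \<noteq> 0"
        using less(1)[OF rk_hi[OF nt] nthi[OF nt]] unfolding zero_tensor_def by blast
      have "N v (b(idx F v := True)) = 0" using z asg_upd[OF b(1) ntI[OF nt]] unfolding zero_tensor_def by blast
      hence w1: "whi F v = 0" using nt_hi[OF nt] b by simp
      have "lo F v = hi F v" using unique_term lo_zero[OF nt w0] hi_zero[OF nt w1] by blast
      thus False using n3 nt w0 w1 unfolding RR3_applicable_def by auto
    qed
  qed
qed

lemma noindep:
  assumes nt: "v \<in> nonterms F"
    and ind: "\<And>a. a \<in> asg I \<Longrightarrow> N v (a(idx F v := True)) = N v (a(idx F v := False))"
    and ih: "tensor_eq I (N (lo F v)) (N (hi F v)) \<Longrightarrow> lo F v = hi F v"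
  shows False
proof -
  let ?x = "idx F v"
  have vN: "v \<in> nodes F" using nt unfolding nonterms_def by auto
  have e0: "N v a = N v (a(?x := False))" if "a \<in> asg I" for a
  proof (cases "a ?x")
    case True
    then have "a = a(?x := True)" by (simp add: fun_upd_idem)
    then show ?thesis using ind[OF that] by metis
  next
    case False
    then have "a = a(?x := False)" by (simp add: fun_upd_idem)
    then show ?thesis by metis
  qed
  have e1: "N v a = N v (a(?x := True))" if "a \<in> asg I" for a
    using e0[OF that] ind[OF that] by simp
  have "wlo F v = 1"
    using scale_one[OF finI nrmv[OF vN] nrmv[OF ntlo[OF nt]] nz[OF vN]] e0 nt_lo[OF nt] by auto
  moreover have "whi F v = 1"
    using scale_one[OF finI nrmv[OF vN] nrmv[OF nthi[OF nt]] nz[OF vN]] e1 nt_hi[OF nt] by auto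
  ultimately have "tensor_eq I (N (lo F v)) (N (hi F v))"
    unfolding tensor_eq_def using nt_lo[OF nt] nt_hi[OF nt] ind by (metis mult_1)
  hence "lo F v = hi F v" by (rule ih)
  thus False using n3 nt \<open>wlo F v = 1\<close> \<open>whi F v = 1\<close> unfolding RR3_applicable_def by auto
qed

lemma child_eq:
  assumes ih: "tensor_eq I (N p) (N q) \<Longrightarrow> p = q"
    and pq: "p \<in> nodes F" "q \<in> nodes F"
    and z: "wp = 0 \<Longrightarrow> p \<in> terms F" "wq = 0 \<Longrightarrow> q \<in> terms F"
    and eq: "\<forall>a\<in>asg I. wp * N p a = wq * N q a"
  shows "p = q \<and> wp = wq"
proof (cases "wp = 0")
  case True
  obtain a where a: "a \<in> asg I" "N q a \<noteq> 0" using nz[OF pq(2)] unfolding zero_tensor_def by blast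
  have "wq = 0" using eq a True by auto
  then show ?thesis using True z unique_term by blast
next
  case False
  have "\<forall>a\<in>asg I. N p a = (wq / wp) * N q a" using eq False by (auto simp: field_simps)
  hence "wq / wp = 1" using scale_one[OF finI nrmv[OF pq(1)] nrmv[OF pq(2)] nz[OF pq(1)]] by blast
  hence "wq = wp" using False by (simp add: divide_eq_1_iff)
  moreover hence "tensor_eq I (N p) (N q)" using eq False unfolding tensor_eq_def by auto
  ultimately show ?thesis using ih pq by auto
qed

lemma dist_n:
  "\<forall>u v. u \<in> nodes F \<longrightarrow> v \<in> nodes F \<longrightarrow> rk u \<le> n \<longrightarrow> rk v \<le> n \<longrightarrow>
     tensor_eq I (N u) (N v) \<longrightarrow> u = v"
proof (induction n)
  case 0
  show ?case
  proof (intro allI impI)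
    fix u v assume "u \<in> nodes F" "v \<in> nodes F" "rk u \<le> 0" "rk v \<le> 0"
    hence "u \<in> terms F" "v \<in> terms F" using rk_pos nodes_cases by fastforce+
    thus "u = v" by (rule unique_term)
  qed
next
  case (Suc n)
  have ihc: "lo F w = hi F w"
    if "w \<in> nonterms F" "rk w \<le> Suc n" "tensor_eq I (N (lo F w)) (N (hi F w))" for w
    using Suc.IH that ntlo nthi rk_lo rk_hi by fastforce
  have noind: False
    if w: "w \<in> nonterms F" "rk w \<le> Suc n"
      "\<And>a. a \<in> asg I \<Longrightarrow> N w (a(idx F w := True)) = N w (a(idx F w := False))" for w
    using noindep[OF w(1) w(3) ihc[OF w(1,2)]] .
  show ?case
  proof (intro allI impI)
    fix u v assume uv: "u \<in> nodes F" "v \<in> nodes F" "rk u \<le> Suc n" "rk v \<le> Suc n"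
      "tensor_eq I (N u) (N v)"
    have uvs: "\<forall>a\<in>asg I. N u a = N v a" using uv(5) unfolding tensor_eq_def .
    show "u = v"
    proof (cases "u \<in> terms F")
      case ut: True
      show ?thesis
      proof (cases "v \<in> terms F")
        case True then show ?thesis using ut unique_term by blast
      next
        case False
        hence nt: "v \<in> nonterms F" using uv nodes_cases by blast
        show ?thesis
        proof (rule FalseE, rule noind[OF nt uv(4)])
          fix a assume a: "a \<in> asg I"
          show "N v (a(idx F v := True)) = N v (a(idx F v := False))"
            using uvs asg_upd[OF a ntI[OF nt]] nt_term[OF ut] by metis
        qed
      qed
    next
      case uf: False
      hence ntu: "u \<in> nonterms F" using uv nodes_cases by blast
      show ?thesis
      proof (cases "v \<in> terms F")
        case vt: True
        show ?thesis
        proof (rule FalseE, rule noind[OF ntu uv(3)])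
          fix a assume a: "a \<in> asg I"
          show "N u (a(idx F u := True)) = N u (a(idx F u := False))"
            using uvs asg_upd[OF a ntI[OF ntu]] nt_term[OF vt] by metis
        qed
      next
        case False
        hence ntv: "v \<in> nonterms F" using uv nodes_cases by blast
        consider "idx F u < idx F v" | "idx F v < idx F u" | "idx F u = idx F v" by fastforce
        then show ?thesis
        proof cases
          case 1
          show ?thesis
          proof (rule FalseE, rule noind[OF ntu uv(3)])
            fix a assume a: "a \<in> asg I"
            have "N v (a(idx F u := True)) = N v (a(idx F u := False))"
              using indep[OF uv(2), of "idx F u"] 1 by auto
            then show "N u (a(idx F u := True)) = N u (a(idx F u := False))"
              using uvs asg_upd[OF a ntI[OF ntu]] by metis
          qed
        next
          case 2
          show ?thesis
          proof (rule FalseE, rule noind[OF ntv uv(4)])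
            fix a assume a: "a \<in> asg I"
            have "N u (a(idx F v := True)) = N u (a(idx F v := False))"
              using indep[OF uv(1), of "idx F v"] 2 by auto
            then show "N v (a(idx F v := True)) = N v (a(idx F v := False))"
              using uvs asg_upd[OF a ntI[OF ntv]] by metis
          qed
        next
          case 3
          have ih: "p = q" if "p \<in> nodes F" "q \<in> nodes F" "tensor_eq I (N p) (N q)"
            "rk p \<le> n" "rk q \<le> n" for p q
            using Suc.IH that by blast
          have "lo F u = lo F v \<and> wlo F u = wlo F v"
          proof (rule child_eq)
            show "tensor_eq I (N (lo F u)) (N (lo F v)) \<Longrightarrow> lo F u = lo F v"
              using ih ntlo[OF ntu] ntlo[OF ntv] rk_lo[OF ntu] rk_lo[OF ntv] uv(3,4) by force
            show "\<forall>a\<in>asg I. wlo F u * N (lo F u) a = wlo F v * N (lo F v) a"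
              using uvs asg_upd[OF _ ntI[OF ntu]] nt_lo[OF ntu] nt_lo[OF ntv] 3 by metis
          qed (use ntlo[OF ntu] ntlo[OF ntv] lo_zero[OF ntu] lo_zero[OF ntv] in auto)
          moreover have "hi F u = hi F v \<and> whi F u = whi F v"
          proof (rule child_eq)
            show "tensor_eq I (N (hi F u)) (N (hi F v)) \<Longrightarrow> hi F u = hi F v"
              using ih nthi[OF ntu] nthi[OF ntv] rk_hi[OF ntu] rk_hi[OF ntv] uv(3,4) by force
            show "\<forall>a\<in>asg I. whi F u * N (hi F u) a = whi F v * N (hi F v) a"
              using uvs asg_upd[OF _ ntI[OF ntu]] nt_hi[OF ntu] nt_hi[OF ntv] 3 by metis
          qed (use nthi[OF ntu] nthi[OF ntv] hi_zero[OF ntu] hi_zero[OF ntv] in auto)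
          ultimately show ?thesis using n4 ntu ntv 3 unfolding RR4_applicable_def by blast
        qed
      qed
    qed
  qed
qed

lemma dist: "u \<in> nodes F \<Longrightarrow> v \<in> nodes F \<Longrightarrow> tensor_eq I (N u) (N v) \<Longrightarrow> u = v"
  using dist_n[of "max (rk u) (rk v)"] by auto

lemma reduced: "reduced_tdd I F"
proof -
  obtain t where t: "t \<in> terms F" using ex_term rootN by blast
  have tt: "terms F = {t}" using t unique_term by blast
  show ?thesis unfolding reduced_tdd_def
  proof (intro conjI)
    show "normal_tdd I F" by (rule nrm)
    show "\<forall>v\<in>nodes F. \<not> zero_tensor I (N v)" using nz by blast
    show "\<forall>u\<in>nodes F. \<forall>v\<in>nodes F. u \<noteq> v \<longrightarrow> \<not> tensor_eq I (N u) (N v)" using dist by blast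
    have "wroot F = 0 \<longrightarrow> root F = t" using n2 tt rootN unfolding RR2_applicable_def by auto
    then show "\<exists>t. terms F = {t} \<and> val F t = 1 \<and>
        (\<forall>v\<in>nonterms F. (wlo F v = 0 \<longrightarrow> lo F v = t) \<and> (whi F v = 0 \<longrightarrow> hi F v = t)) \<and>
        (wroot F = 0 \<longrightarrow> root F = t)"
      using tt terms_val1[OF t] lo_zero hi_zero by (intro exI[of _ t]) auto
  qed
qed

end

theorem theorem4:
  fixes I :: "'i::linorder set" and F :: "('v, 'i) tdd"
  assumes "is_tdd I F" and "ordered_tdd F" and "normal_tdd I F"
  shows "reduced_tdd I F \<longleftrightarrow>
    \<not> (RR1_applicable F \<or> RR2_applicable F \<or> RR3_applicable F \<or> RR4_applicable F)"
proof -
  interpret tddctx I F using assms(1,2) by unfold_locales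
  show ?thesis
  proof
    assume "reduced_tdd I F"
    then show "\<not> (RR1_applicable F \<or> RR2_applicable F \<or> RR3_applicable F \<or> RR4_applicable F)"
      by (rule red_noRR)
  next
    assume h: "\<not> (RR1_applicable F \<or> RR2_applicable F \<or> RR3_applicable F \<or> RR4_applicable F)"
    interpret tddnr I F using assms h by unfold_locales auto
    show "reduced_tdd I F" by (rule reduced)
  qed
qed

end
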